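(* Let $d$ be a metric on $\mathbb R^n$ induced by a norm, let $\{\mathbb R^n;w_1,\dots,w_N;p_1,\dots,p_N\}$ be a hyperbolic IFS (contractions $w_i$ on $(\mathbb R^n,d)$, constant probabilities $p_i\in(0,1]$, $\sum_ip_i=1$) with attractor $A_\infty$. For $\delta>0$ let $\{\mathcal D^n(\delta);\tilde w_1,\dots,\tilde w_N;p_1,\dots,p_N\}$ be the DIFS with the same constant probabilities, where $\tilde w_i$ is the $\delta$-roundoff of $w_i$, and let $\mathcal A_{\mathcal F}(\delta)$ be the family of all positive recurrent communication classes of its associated Markov chain. Then $$\lim_{\delta\to0}\mathcal A_k^+(\delta)=A_\infty$$ in the Hausdorff metric induced by $d$, where for each $\delta$, $\mathcal A_k^+(\delta)$ is any set from $\mathcal A_{\mathcal F}(\delta)$.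
   Context: For $m\in\mathbb Z^n$, $C_\delta(m)=\prod_{j=1}^n[(m_j-\tfrac12)\delta,(m_j+\tfrac12)\delta)$; $\mathcal D^n(\delta)=\{\delta m:m\in\mathbb Z^n\}\subset\mathbb R^n$. The $\delta$-roundoff of $x$ is $\tilde x=\delta m$ where $x\in C_\delta(m)$; the $\delta$-roundoff of $w$ is $\tilde w(\tilde x)=\widetilde{w(\tilde x)}$ on $\mathcal D^n(\delta)$. The attractor of the hyperbolic IFS is the unique nonempty compact $A_\infty$ with $A_\infty=\bigcup_iw_i(A_\infty)$. The associated Markov chain of the DIFS has transition probabilities $P(\tilde x,\tilde y)=\sum_ip_i\mathbf 1_{\{\tilde y\}}(\tilde w_i(\tilde x))$ on $\mathcal D^n(\delta)$. Accessibility: $P^k(\tilde x,\tilde y)>0$ for some $k\ge1$; a communication class is a maximal nonempty set of mutually accessible states; a state is positive recurrent if the chain started there returns a.s. with finite expected return time; a positive recurrent communication class is a communication class of positive recurrent states. *)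

theory Defs
  imports "HOL-Analysis.Analysis"
begin

definition is_norm :: "(real^'n \<Rightarrow> real) \<Rightarrow> bool" where
  "is_norm nrm \<longleftrightarrow> (\<forall>x. nrm x = 0 \<longleftrightarrow> x = 0) \<and>
     (\<forall>x y. nrm (x + y) \<le> nrm x + nrm y) \<and> (\<forall>c x. nrm (c *\<^sub>R x) = \<bar>c\<bar> * nrm x)"

definition contraction_wrt :: "(real^'n \<Rightarrow> real^'n \<Rightarrow> real) \<Rightarrow> (real^'n \<Rightarrow> real^'n) \<Rightarrow> bool" where
  "contraction_wrt d f \<longleftrightarrow> (\<exists>s. 0 \<le> s \<and> s < 1 \<and> (\<forall>x y. d (f x) (f y) \<le> s * d x y))"

text \<open>Hausdorff distance w.r.t. a metric d, valued in [0,\<infinity>] (no truncation for unbounded sets).\<close>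
definition hausdorff_dist :: "('a \<Rightarrow> 'a \<Rightarrow> real) \<Rightarrow> 'a set \<Rightarrow> 'a set \<Rightarrow> ennreal" where
  "hausdorff_dist d A B = max (SUP a\<in>A. INF b\<in>B. ennreal (d a b)) (SUP b\<in>B. INF a\<in>A. ennreal (d a b))"

definition cell :: "real \<Rightarrow> (int^'n) \<Rightarrow> (real^'n) set" where
  "cell \<delta> m = {x. \<forall>j. (real_of_int (m$j) - 1/2) * \<delta> \<le> x$j \<and> x$j < (real_of_int (m$j) + 1/2) * \<delta>}"

definition lattice :: "real \<Rightarrow> (real^'n) set" where
  "lattice \<delta> = {\<delta> *\<^sub>R (\<chi> j. real_of_int (m$j)) | m :: int^'n. True}"

text \<open>\<delta>-roundoff: \<delta> m where x lies in cell \<delta> m, i.e. m_j = floor(x_j/\<delta> + 1/2).\<close>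
definition roundoff :: "real \<Rightarrow> real^'n \<Rightarrow> real^'n" where
  "roundoff \<delta> x = (\<chi> j. \<delta> * real_of_int \<lfloor>x$j / \<delta> + 1/2\<rfloor>)"

primrec Pk :: "nat \<Rightarrow> (nat \<Rightarrow> real^'n \<Rightarrow> real^'n) \<Rightarrow> (nat \<Rightarrow> real) \<Rightarrow> real \<Rightarrow>
    nat \<Rightarrow> real^'n \<Rightarrow> real^'n \<Rightarrow> real" where
  "Pk M w p \<delta> 0 x y = (if x = y then 1 else 0)"
| "Pk M w p \<delta> (Suc k) x y = (\<Sum>i<M. p i * Pk M w p \<delta> k (roundoff \<delta> (w i x)) y)"

text \<open>First-passage probabilities: probability that the chain from x first hits y at step k (k \<ge> 1).\<close>
primrec fpass :: "nat \<Rightarrow> (nat \<Rightarrow> real^'n \<Rightarrow> real^'n) \<Rightarrow> (nat \<Rightarrow> real) \<Rightarrow> real \<Rightarrow>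
    nat \<Rightarrow> real^'n \<Rightarrow> real^'n \<Rightarrow> real" where
  "fpass M w p \<delta> 0 x y = 0"
| "fpass M w p \<delta> (Suc k) x y = (\<Sum>i<M. p i *
      (if roundoff \<delta> (w i x) = y then (if k = 0 then 1 else 0)
       else fpass M w p \<delta> k (roundoff \<delta> (w i x)) y))"

definition accessible where
  "accessible M w p \<delta> x y \<longleftrightarrow> (\<exists>k\<ge>1. Pk M w p \<delta> k x y > 0)"

definition mutually_accessible where
  "mutually_accessible M w p \<delta> C \<longleftrightarrow>
     (\<forall>x\<in>C. \<forall>y\<in>C. accessible M w p \<delta> x y \<and> accessible M w p \<delta> y x)"

definition communication_class where
  "communication_class M w p \<delta> C \<longleftrightarrow> C \<noteq> {} \<and> C \<subseteq> lattice \<delta> \<and>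
     mutually_accessible M w p \<delta> C \<and>
     (\<forall>D. C \<subseteq> D \<and> D \<subseteq> lattice \<delta> \<and> mutually_accessible M w p \<delta> D \<longrightarrow> D = C)"

text \<open>Positive recurrence: return a.s. (first-return probabilities sum to 1) with finite
  expected return time.\<close>
definition positive_recurrent where
  "positive_recurrent M w p \<delta> x \<longleftrightarrow>
     (\<lambda>k. fpass M w p \<delta> k x x) sums 1 \<and> summable (\<lambda>k. real k * fpass M w p \<delta> k x x)"

definition pos_rec_class where
  "pos_rec_class M w p \<delta> C \<longleftrightarrow> communication_class M w p \<delta> C \<and>
     (\<forall>x\<in>C. positive_recurrent M w p \<delta> x)"

end

theory Submission
  imports Defs
begin

lemma Pk_nonneg:
  assumes "\<forall>i<M. 0 \<le> p i"
  shows "0 \<le> Pk M w p \<delta> k x y"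
  using assms by (induction k arbitrary: x) (auto intro!: sum_nonneg)

lemma Pk_Suc_pos:
  assumes "\<forall>i<M. 0 < p i"
  shows "0 < Pk M w p \<delta> (Suc k) x y \<longleftrightarrow> (\<exists>i<M. 0 < Pk M w p \<delta> k (roundoff \<delta> (w i x)) y)"
proof
  have nn: "\<And>z. 0 \<le> Pk M w p \<delta> k z y" using assms by (intro Pk_nonneg) (auto simp: less_imp_le)
  assume "0 < Pk M w p \<delta> (Suc k) x y"
  hence "0 < (\<Sum>i<M. p i * Pk M w p \<delta> k (roundoff \<delta> (w i x)) y)" by simp
  then obtain i where i: "i < M" "0 < p i * Pk M w p \<delta> k (roundoff \<delta> (w i x)) y"
    by (metis (no_types, lifting) lessThan_iff not_le sum_nonpos)
  thus "\<exists>i<M. 0 < Pk M w p \<delta> k (roundoff \<delta> (w i x)) y"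
    using assms by (meson zero_less_mult_pos)
next
  have nn: "\<And>z. 0 \<le> Pk M w p \<delta> k z y" using assms by (intro Pk_nonneg) (auto simp: less_imp_le)
  assume "\<exists>i<M. 0 < Pk M w p \<delta> k (roundoff \<delta> (w i x)) y"
  then obtain i where "i < M" "0 < Pk M w p \<delta> k (roundoff \<delta> (w i x)) y" by blast
  hence "0 < p i * Pk M w p \<delta> k (roundoff \<delta> (w i x)) y" using assms by simp
  hence "0 < (\<Sum>i<M. p i * Pk M w p \<delta> k (roundoff \<delta> (w i x)) y)"
    using \<open>i < M\<close> assms nn by (intro sum_pos2[of "{..<M}" i]) (auto intro: mult_nonneg_nonneg less_imp_le)
  thus "0 < Pk M w p \<delta> (Suc k) x y" by simp
qed

lemma Pk_trans:
  assumes "\<forall>i<M. 0 < p i"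
  shows "0 < Pk M w p \<delta> a x y \<Longrightarrow> 0 < Pk M w p \<delta> b y z \<Longrightarrow> 0 < Pk M w p \<delta> (a + b) x z"
proof (induction a arbitrary: x)
  case 0
  then show ?case by (simp split: if_splits)
next
  case (Suc a)
  then show ?case using Pk_Suc_pos[OF assms] by (metis add_Suc)
qed

lemma acc_trans:
  assumes "\<forall>i<M. 0 < p i"
  shows "accessible M w p \<delta> x y \<Longrightarrow> accessible M w p \<delta> y z \<Longrightarrow> accessible M w p \<delta> x z"
  unfolding accessible_def using Pk_trans[OF assms] by (metis le_add1 order_trans)

lemma Pk_mult:
  assumes "\<forall>i<M. 0 < p i" "0 < Pk M w p \<delta> k x x"
  shows "0 < Pk M w p \<delta> (m * k) x x"
proof (induction m)
  case 0 then show ?case by simp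
next
  case (Suc m) then show ?case using Pk_trans[OF assms(1) assms(2)] by simp
qed

lemma fpass_nonneg:
  assumes "\<forall>i<M. 0 \<le> p i"
  shows "0 \<le> fpass M w p \<delta> k x y"
  using assms by (induction k arbitrary: x) (auto intro!: sum_nonneg)

lemma fpass_le_Pk:
  assumes "\<forall>i<M. 0 \<le> p i"
  shows "fpass M w p \<delta> k x y \<le> Pk M w p \<delta> k x y"
proof (induction k arbitrary: x)
  case 0 then show ?case by simp
next
  case (Suc k)
  show ?case unfolding fpass.simps Pk.simps
  proof (rule sum_mono)
    fix i assume i: "i \<in> {..<M}"
    have "(if roundoff \<delta> (w i x) = y then (if k = 0 then 1 else 0)
       else fpass M w p \<delta> k (roundoff \<delta> (w i x)) y) \<le> Pk M w p \<delta> k (roundoff \<delta> (w i x)) y"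
      using Suc Pk_nonneg[OF assms] by auto
    thus "p i * (if roundoff \<delta> (w i x) = y then (if k = 0 then 1 else 0)
       else fpass M w p \<delta> k (roundoff \<delta> (w i x)) y) \<le> p i * Pk M w p \<delta> k (roundoff \<delta> (w i x)) y"
      using assms i by (intro mult_left_mono) auto
  qed
qed

lemma fpass_Suc_sum:
  "(\<Sum>k<K. fpass M w p \<delta> (Suc k) x y) = (\<Sum>i<M. p i * (\<Sum>k<K.
      (if roundoff \<delta> (w i x) = y then (if k = 0 then 1 else 0)
       else fpass M w p \<delta> k (roundoff \<delta> (w i x)) y)))"
  by (simp add: sum_distrib_left sum.swap[of _ "{..<K}"])

lemma ind_sum_eq: "(\<Sum>k<(K::nat). (if k = 0 then 1 else 0::real)) = (if K = 0 then 0 else 1)"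
  by (induction K) auto

lemma ind_sum_le1: "(\<Sum>k<(K::nat). (if k = 0 then 1 else 0::real)) \<le> 1"
  by (simp add: ind_sum_eq)

lemma fpass_psum_le1:
  assumes "\<forall>i<M. 0 \<le> p i" "(\<Sum>i<M. p i) = 1"
  shows "(\<Sum>k<K. fpass M w p \<delta> k z y) \<le> 1"
proof (induction K arbitrary: z)
  case 0 then show ?case by simp
next
  case (Suc K)
  have "(\<Sum>k<Suc K. fpass M w p \<delta> k z y) = (\<Sum>k<K. fpass M w p \<delta> (Suc k) z y)"
    by (subst sum.lessThan_Suc_shift) simp
  also have "\<dots> \<le> (\<Sum>i<M. p i * 1)" unfolding fpass_Suc_sum
  proof (rule sum_mono)
    fix i assume i: "i \<in> {..<M}"
    have "(\<Sum>k<K. (if roundoff \<delta> (w i z) = y then (if k = 0 then 1 else 0)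
       else fpass M w p \<delta> k (roundoff \<delta> (w i z)) y)) \<le> 1"
      using Suc ind_sum_le1[of K] by (cases "roundoff \<delta> (w i z) = y") auto
    thus "p i * (\<Sum>k<K. (if roundoff \<delta> (w i z) = y then (if k = 0 then 1 else 0)
       else fpass M w p \<delta> k (roundoff \<delta> (w i z)) y)) \<le> p i * 1"
      using assms i by (intro mult_left_mono) auto
  qed
  finally show ?case using assms by simp
qed

lemma recurrent_return:
  assumes p: "\<forall>i<M. 0 < p i" "(\<Sum>i<M. p i) = 1" "\<forall>i<M. p i \<le> 1"
    and rec: "positive_recurrent M w p \<delta> x" and i: "i < M"
    and ne: "roundoff \<delta> (w i x) \<noteq> x"
  shows "\<exists>k\<ge>1. 0 < Pk M w p \<delta> k (roundoff \<delta> (w i x)) x"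
proof (rule ccontr)
  let ?y = "roundoff \<delta> (w i x)"
  have p0: "\<forall>i<M. 0 \<le> p i" using p by (auto simp: less_imp_le)
  assume "\<not> ?thesis"
  hence z: "\<And>k. k \<ge> 1 \<Longrightarrow> Pk M w p \<delta> k ?y x \<le> 0" by (auto simp: not_less)
  have fz: "fpass M w p \<delta> k ?y x = 0" for k
  proof (cases k)
    case 0 then show ?thesis by simp
  next
    case (Suc k')
    have "fpass M w p \<delta> k ?y x \<le> Pk M w p \<delta> k ?y x" by (rule fpass_le_Pk[OF p0])
    moreover have "0 \<le> fpass M w p \<delta> k ?y x" by (rule fpass_nonneg[OF p0])
    ultimately show ?thesis using z[of k] Suc by simp
  qed
  define T where "T j k = (if roundoff \<delta> (w j x) = x then (if k = 0 then 1 else 0)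
       else fpass M w p \<delta> k (roundoff \<delta> (w j x)) x)" for j k
  have rest: "(\<Sum>j\<in>{..<M}-{i}. p j) = 1 - p i"
    using p(2) sum.remove[of "{..<M}" i p] i by simp
  have bound: "(\<Sum>k<K. fpass M w p \<delta> k x x) \<le> 1 - p i" for K
  proof (cases K)
    case 0 then show ?thesis using p i by (simp add: less_imp_le)
  next
    case (Suc K')
    have "(\<Sum>k<K. fpass M w p \<delta> k x x) = (\<Sum>k<K'. fpass M w p \<delta> (Suc k) x x)"
      using Suc by (simp only: sum.lessThan_Suc_shift) simp
    also have "\<dots> = (\<Sum>j<M. p j * (\<Sum>k<K'. T j k))" unfolding fpass_Suc_sum T_def ..
    also have "\<dots> = p i * (\<Sum>k<K'. T i k) + (\<Sum>j\<in>{..<M}-{i}. p j * (\<Sum>k<K'. T j k))"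
      using i by (simp add: sum.remove)
    also have "\<dots> \<le> 0 + (\<Sum>j\<in>{..<M}-{i}. p j * 1)"
    proof (intro add_mono sum_mono)
      show "p i * (\<Sum>k<K'. T i k) \<le> 0" using ne fz by (simp add: T_def)
    next
      fix j assume j: "j \<in> {..<M}-{i}"
      have "(\<Sum>k<K'. T j k) \<le> 1"
        using fpass_psum_le1[OF p0 p(2)] ind_sum_le1[of K'] by (cases "roundoff \<delta> (w j x) = x") (auto simp: T_def)
      thus "p j * (\<Sum>k<K'. T j k) \<le> p j * 1" using p0 j by (intro mult_left_mono) auto
    qed
    finally show ?thesis using rest by simp
  qed
  have "(\<lambda>K. \<Sum>k<K. fpass M w p \<delta> k x x) \<longlonglongrightarrow> 1"
    using rec unfolding positive_recurrent_def sums_def by blast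
  hence "1 \<le> 1 - p i" using bound by (intro LIMSEQ_le_const2) auto
  thus False using p i by auto
qed


lemma nrm_basic:
  assumes "is_norm nrm"
  shows "nrm 0 = 0" "nrm (- x) = nrm x" "0 \<le> nrm x" "nrm (x - y) = nrm (y - x)"
    "nrm (x + y) \<le> nrm x + nrm y" "nrm (c *\<^sub>R x) = \<bar>c\<bar> * nrm x"
proof -
  show z: "nrm 0 = 0" using assms by (simp add: is_norm_def)
  show n: "nrm (- x) = nrm x" for x using assms unfolding is_norm_def
    by (metis abs_minus_cancel abs_one mult_1 scaleR_minus1_left)
  show "nrm (x + y) \<le> nrm x + nrm y" using assms by (simp add: is_norm_def)
  show "nrm (c *\<^sub>R x) = \<bar>c\<bar> * nrm x" using assms by (simp add: is_norm_def)
  have "nrm (x + - x) \<le> nrm x + nrm (- x)" using assms unfolding is_norm_def by blast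
  thus "0 \<le> nrm x" using z n by simp
  show "nrm (x - y) = nrm (y - x)" using n[of "x - y"] by simp
qed

lemma nrm_tri:
  assumes "is_norm nrm"
  shows "nrm (x - z) \<le> nrm (x - y) + nrm (y - z)"
  using nrm_basic(5)[OF assms, of "x - y" "y - z"] by simp

lemma nrm_sum:
  assumes "is_norm nrm" "finite S"
  shows "nrm (\<Sum>i\<in>S. f i) \<le> (\<Sum>i\<in>S. nrm (f i))"
  using assms(2)
proof (induction S rule: finite_induct)
  case empty then show ?case using nrm_basic[OF assms(1)] by simp
next
  case (insert x F)
  then show ?case using nrm_basic(5)[OF assms(1), of "f x" "sum f F"] by simp
qed

lemma nrm_le_comp:
  assumes "is_norm nrm"
  shows "nrm (v::real^'n) \<le> (\<Sum>j\<in>UNIV. \<bar>v$j\<bar> * nrm (axis j 1))"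
proof -
  have "v = (\<Sum>j\<in>UNIV. (v$j) *\<^sub>R axis j 1)"
    using basis_expansion[of v] by (simp add: scalar_mult_eq_scaleR)
  hence "nrm v = nrm (\<Sum>j\<in>UNIV. (v$j) *\<^sub>R axis j (1::real))" by simp
  also have "\<dots> \<le> (\<Sum>j\<in>UNIV. nrm ((v$j) *\<^sub>R axis j (1::real)))" by (rule nrm_sum[OF assms]) simp
  also have "\<dots> = (\<Sum>j\<in>UNIV. \<bar>v$j\<bar> * nrm (axis j 1))" using nrm_basic(6)[OF assms] by simp
  finally show ?thesis .
qed

lemma nrm_le_K:
  assumes "is_norm nrm"
  shows "nrm (v::real^'n) \<le> (\<Sum>j\<in>UNIV. nrm (axis j (1::real))) * norm v"
proof -
  have "nrm v \<le> (\<Sum>j\<in>UNIV. \<bar>v$j\<bar> * nrm (axis j 1))" by (rule nrm_le_comp[OF assms])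
  also have "\<dots> \<le> (\<Sum>j\<in>UNIV. norm v * nrm (axis j 1))"
    by (intro sum_mono mult_right_mono component_le_norm_cart nrm_basic(3)[OF assms])
  finally show ?thesis by (simp add: sum_distrib_left mult.commute)
qed

lemma roundoff_err:
  assumes "is_norm nrm" "0 < \<delta>"
  shows "nrm (roundoff \<delta> u - (u::real^'n)) \<le> \<delta> / 2 * (\<Sum>j\<in>UNIV. nrm (axis j (1::real)))"
proof -
  have c: "\<bar>(roundoff \<delta> u - u)$j\<bar> \<le> \<delta> / 2" for j
  proof -
    let ?t = "u$j / \<delta>"
    have f1: "real_of_int \<lfloor>?t + 1/2\<rfloor> \<le> ?t + 1/2" by (rule of_int_floor_le)
    have f2: "?t + 1/2 < real_of_int \<lfloor>?t + 1/2\<rfloor> + 1" by (rule real_of_int_floor_add_one_gt)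
    have e: "u$j = \<delta> * ?t" using assms(2) by simp
    have "\<delta> * real_of_int \<lfloor>?t + 1/2\<rfloor> \<le> \<delta> * (?t + 1/2)" using f1 assms(2) by (intro mult_left_mono) auto
    moreover have "\<delta> * (?t + 1/2) \<le> \<delta> * (real_of_int \<lfloor>?t + 1/2\<rfloor> + 1)" using f2 assms(2) by (intro mult_left_mono) auto
    moreover have "\<delta> * (?t + 1/2) = u$j + \<delta>/2" using assms(2) by (simp add: field_simps)
    ultimately have "\<bar>\<delta> * real_of_int \<lfloor>?t + 1/2\<rfloor> - u$j\<bar> \<le> \<delta>/2"
      by (simp only: abs_le_iff distrib_left mult_1_right) linarith
    thus ?thesis unfolding roundoff_def by simp
  qed
  have "nrm (roundoff \<delta> u - u) \<le> (\<Sum>j\<in>UNIV. \<bar>(roundoff \<delta> u - u)$j\<bar> * nrm (axis j 1))"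
    by (rule nrm_le_comp[OF assms(1)])
  also have "\<dots> \<le> (\<Sum>j\<in>UNIV. \<delta> / 2 * nrm (axis j (1::real)))"
    by (intro sum_mono mult_right_mono c nrm_basic(3)[OF assms(1)])
  finally show ?thesis by (simp add: sum_distrib_left)
qed

lemma roundoff_lattice: "roundoff \<delta> u \<in> lattice \<delta>"
  unfolding lattice_def roundoff_def
  by (rule CollectI, rule exI[of _ "\<chi> j. \<lfloor>u$j / \<delta> + 1/2\<rfloor>"]) (simp add: vec_eq_iff)


lemma gsum_le:
  assumes "0 \<le> (s::real)" "s < 1"
  shows "(\<Sum>j<k. s^j) \<le> 1 / (1 - s)"
proof -
  have "(\<Sum>j<k. s^j) = (1 - s^k) / (1 - s)" using assms by (simp add: sum_gp_strict)
  also have "\<dots> \<le> 1 / (1 - s)" using assms by (intro divide_right_mono) auto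
  finally show ?thesis .
qed

lemma path_near:
  assumes norm: "is_norm nrm" and p: "\<forall>i<M. 0 < p i"
    and wA: "\<forall>i<M. \<forall>a\<in>A. w i a \<in> A"
    and ctr: "\<forall>i<M. \<forall>u v. nrm (w i u - w i v) \<le> s * nrm (u - v)" and s0: "0 \<le> s"
    and err: "\<forall>u. nrm (roundoff \<delta> u - u) \<le> e"
  shows "0 < Pk M w p \<delta> k x y \<Longrightarrow> a \<in> A \<Longrightarrow>
     \<exists>a'\<in>A. nrm (y - a') \<le> s^k * nrm (x - a) + e * (\<Sum>j<k. s^j)"
proof (induction k arbitrary: x a)
  case 0
  then show ?case by (auto split: if_splits)
next
  case (Suc k)
  then obtain i where i: "i < M" "0 < Pk M w p \<delta> k (roundoff \<delta> (w i x)) y"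
    using Pk_Suc_pos[OF p] by blast
  have wa: "w i a \<in> A" using wA i Suc by blast
  obtain a' where a': "a' \<in> A"
    "nrm (y - a') \<le> s^k * nrm (roundoff \<delta> (w i x) - w i a) + e * (\<Sum>j<k. s^j)"
    using Suc.IH[OF i(2) wa] by blast
  have "nrm (roundoff \<delta> (w i x) - w i a) \<le> nrm (roundoff \<delta> (w i x) - w i x) + nrm (w i x - w i a)"
    by (rule nrm_tri[OF norm])
  also have "\<dots> \<le> e + s * nrm (x - a)" using err ctr i by (intro add_mono) auto
  finally have "s^k * nrm (roundoff \<delta> (w i x) - w i a) \<le> s^k * (e + s * nrm (x - a))"
    using s0 by (intro mult_left_mono) auto
  hence "nrm (y - a') \<le> s^(Suc k) * nrm (x - a) + e * (\<Sum>j<Suc k. s^j)"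
    using a'(2) by (simp add: algebra_simps)
  thus ?case using a'(1) by blast
qed

lemma approx_attr:
  assumes norm: "is_norm nrm"
    and clos: "\<forall>x\<in>CC. \<forall>i<M. roundoff \<delta> (w i x) \<in> CC" and x0: "x0 \<in> CC"
    and cover: "\<forall>a\<in>A. \<exists>i<M. \<exists>b\<in>A. a = w i b"
    and ctr: "\<forall>i<M. \<forall>u v. nrm (w i u - w i v) \<le> s * nrm (u - v)" and s0: "0 \<le> s"
    and err: "\<forall>u. nrm (roundoff \<delta> u - u) \<le> e"
  shows "\<forall>a\<in>A. \<exists>x\<in>CC. \<exists>a'\<in>A. nrm (x - a) \<le> s^k * nrm (x0 - a') + e * (\<Sum>j<k. s^j)"
proof (induction k)
  case 0
  then show ?case using x0 by auto
next
  case (Suc k)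
  show ?case
  proof
    fix a assume a: "a \<in> A"
    then obtain i b where ib: "i < M" "b \<in> A" "a = w i b" using cover by blast
    then obtain x1 a' where x1: "x1 \<in> CC" "a' \<in> A"
      "nrm (x1 - b) \<le> s^k * nrm (x0 - a') + e * (\<Sum>j<k. s^j)" using Suc by blast
    have "nrm (roundoff \<delta> (w i x1) - a) \<le> nrm (roundoff \<delta> (w i x1) - w i x1) + nrm (w i x1 - w i b)"
      using ib by (simp add: nrm_tri[OF norm])
    also have "\<dots> \<le> e + s * nrm (x1 - b)" using err ctr ib by (intro add_mono) auto
    also have "\<dots> \<le> e + s * (s^k * nrm (x0 - a') + e * (\<Sum>j<k. s^j))"
      using x1 s0 by (intro add_left_mono mult_left_mono) auto
    also have "\<dots> = s^(Suc k) * nrm (x0 - a') + e * (\<Sum>j<Suc k. s^j)"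
      by (simp add: sum.lessThan_Suc_shift sum_distrib_left algebra_simps del: sum.lessThan_Suc)
    finally show "\<exists>x\<in>CC. \<exists>a'\<in>A. nrm (x - a) \<le> s^(Suc k) * nrm (x0 - a') + e * (\<Sum>j<Suc k. s^j)"
      using clos x1 ib by blast
  qed
qed

lemma INF_le_eps:
  assumes "\<And>\<epsilon>. 0 < \<epsilon> \<Longrightarrow> \<exists>a\<in>S. f a \<le> B + \<epsilon>" "0 \<le> B"
  shows "(INF a\<in>S. ennreal (f a)) \<le> ennreal B"
proof (rule ennreal_le_epsilon)
  fix \<epsilon> :: real assume e: "0 < \<epsilon>"
  then obtain a where a: "a \<in> S" "f a \<le> B + \<epsilon>" using assms by blast
  have "(INF a\<in>S. ennreal (f a)) \<le> ennreal (f a)" using a(1) by (rule INF_lower)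
  also have "\<dots> \<le> ennreal (B + \<epsilon>)" using a(2) by (rule ennreal_leI)
  also have "\<dots> = ennreal B + ennreal \<epsilon>" using e assms by (simp add: ennreal_plus)
  finally show "(INF a\<in>S. ennreal (f a)) \<le> ennreal B + ennreal \<epsilon>" .
qed

lemma class_closed:
  assumes p: "\<forall>i<M. 0 < p i" "(\<Sum>i<M. p i) = 1" "\<forall>i<M. p i \<le> 1"
    and pc: "pos_rec_class M w p \<delta> CC" and x: "x \<in> CC" and i: "i < M"
  shows "roundoff \<delta> (w i x) \<in> CC"
proof (cases "roundoff \<delta> (w i x) = x")
  case True then show ?thesis using x by simp
next
  case False
  let ?y = "roundoff \<delta> (w i x)"
  have cc: "communication_class M w p \<delta> CC" and rec: "positive_recurrent M w p \<delta> x"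
    using pc x unfolding pos_rec_class_def by auto
  obtain k where k: "k \<ge> 1" "0 < Pk M w p \<delta> k ?y x"
    using recurrent_return[OF p rec i False] by blast
  have yx: "accessible M w p \<delta> ?y x" using k unfolding accessible_def by blast
  have "0 < Pk M w p \<delta> (Suc 0) x ?y" using Pk_Suc_pos[OF p(1), where k=0 and x=x and y="roundoff \<delta> (w i x)" and \<delta>=\<delta> and w=w] i
    by (simp del: Pk.simps(2)) blast
  hence xy: "accessible M w p \<delta> x ?y" unfolding accessible_def by (intro exI[of _ "Suc 0"]) simp
  have ma: "mutually_accessible M w p \<delta> CC" using cc unfolding communication_class_def by blast
  have "mutually_accessible M w p \<delta> (insert ?y CC)"
    unfolding mutually_accessible_def
  proof (intro ballI)
    fix u v assume u: "u \<in> insert ?y CC" and v: "v \<in> insert ?y CC"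
    have to_x: "accessible M w p \<delta> z x" if "z \<in> insert ?y CC" for z
      using that yx ma x unfolding mutually_accessible_def by auto
    have from_x: "accessible M w p \<delta> x z" if "z \<in> insert ?y CC" for z
      using that xy ma x unfolding mutually_accessible_def by auto
    show "accessible M w p \<delta> u v \<and> accessible M w p \<delta> v u"
      using acc_trans[OF p(1)] to_x from_x u v by blast
  qed
  moreover have "insert ?y CC \<subseteq> lattice \<delta>" using cc roundoff_lattice unfolding communication_class_def by auto
  ultimately have "insert ?y CC = CC" using cc unfolding communication_class_def by blast
  thus ?thesis by blast
qed


theorem corollary8:
  fixes nrm :: "real^'n \<Rightarrow> real"
    and M :: nat
    and w :: "nat \<Rightarrow> real^'n \<Rightarrow> real^'n"
    and p :: "nat \<Rightarrow> real"
    and A :: "(real^'n) set"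
    and C :: "real \<Rightarrow> (real^'n) set"
  assumes norm: "is_norm nrm"
    and M: "M \<ge> 1"
    and contr: "\<forall>i<M. contraction_wrt (\<lambda>x y. nrm (x - y)) (w i)"
    and prob: "\<forall>i<M. 0 < p i \<and> p i \<le> 1" "(\<Sum>i<M. p i) = 1"
    and attr: "A \<noteq> {}" "compact A" "A = (\<Union>i<M. w i ` A)"
    and choice: "\<forall>\<^sub>F \<delta> in at_right 0. pos_rec_class M w p \<delta> (C \<delta>)"
  shows "((\<lambda>\<delta>. hausdorff_dist (\<lambda>x y. nrm (x - y)) (C \<delta>) A) \<longlongrightarrow> 0) (at_right 0)"
proof -
  have p1: "\<forall>i<M. 0 < p i" and p3: "\<forall>i<M. p i \<le> 1" using prob by auto
  have "\<forall>i. \<exists>s. i < M \<longrightarrow> 0 \<le> s \<and> s < 1 \<and> (\<forall>x y. nrm (w i x - w i y) \<le> s * nrm (x - y))"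
    using contr unfolding contraction_wrt_def by blast
  then obtain sf where sf: "\<And>i. i < M \<Longrightarrow> 0 \<le> sf i \<and> sf i < 1 \<and> (\<forall>x y. nrm (w i x - w i y) \<le> sf i * nrm (x - y))"
    by metis
  define s where "s = Max (sf ` {..<M})"
  have ne: "sf ` {..<M} \<noteq> {}" using M by (auto simp: lessThan_empty_iff)
  have "s \<in> sf ` {..<M}" unfolding s_def using ne by (intro Max_in) auto
  then have s0: "0 \<le> s" and s1: "s < 1" using sf by auto
  have sfs: "sf i \<le> s" if "i < M" for i unfolding s_def using that by (intro Max_ge) auto
  have ctr: "\<forall>i<M. \<forall>u v. nrm (w i u - w i v) \<le> s * nrm (u - v)"
  proof (intro allI impI)
    fix i u v assume i: "i < M"
    have "nrm (w i u - w i v) \<le> sf i * nrm (u - v)" using sf[OF i] by blast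
    also have "\<dots> \<le> s * nrm (u - v)" using sfs[OF i] nrm_basic(3)[OF norm] by (intro mult_right_mono) auto
    finally show "nrm (w i u - w i v) \<le> s * nrm (u - v)" .
  qed
  define K where "K = (\<Sum>j\<in>UNIV. nrm (axis j (1::real) :: real^'n))"
  have K0: "0 \<le> K" unfolding K_def using nrm_basic(3)[OF norm] by (intro sum_nonneg) auto
  obtain R0 where R0: "\<forall>a\<in>A. norm a \<le> R0" using compact_imp_bounded[OF attr(2)] unfolding bounded_iff by blast
  have R: "nrm a \<le> K * R0" if "a \<in> A" for a
  proof -
    have "nrm a \<le> K * norm a" unfolding K_def by (rule nrm_le_K[OF norm])
    also have "\<dots> \<le> K * R0" using R0 that K0 by (intro mult_left_mono) auto
    finally show ?thesis .
  qed
  have wA: "\<forall>i<M. \<forall>a\<in>A. w i a \<in> A" using attr(3) by blast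
  have cover: "\<forall>a\<in>A. \<exists>i<M. \<exists>b\<in>A. a = w i b"
  proof
    fix a assume "a \<in> A"
    hence "a \<in> (\<Union>i<M. w i ` A)" using attr(3) by simp
    thus "\<exists>i<M. \<exists>b\<in>A. a = w i b" by blast
  qed
  define B where "B \<delta> = \<delta> / 2 * K / (1 - s)" for \<delta> :: real
  have key: "hausdorff_dist (\<lambda>x y. nrm (x - y)) (C \<delta>) A \<le> ennreal (B \<delta>)"
    if d0: "0 < \<delta>" and pc: "pos_rec_class M w p \<delta> (C \<delta>)" for \<delta>
  proof -
    define e where "e = \<delta> / 2 * K"
    have e0: "0 \<le> e" unfolding e_def using d0 K0 by simp
    have err: "\<forall>u. nrm (roundoff \<delta> u - u) \<le> e" unfolding e_def K_def using roundoff_err[OF norm d0] by blast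
    have B0: "0 \<le> B \<delta>" unfolding B_def using d0 K0 s1 by simp
    have eB: "e * (\<Sum>j<k. s^j) \<le> B \<delta>" for k
    proof -
      have "e * (\<Sum>j<k. s^j) \<le> e * (1 / (1 - s))" using gsum_le[OF s0 s1] e0 by (intro mult_left_mono)
      thus ?thesis unfolding B_def e_def by simp
    qed
    have cc: "communication_class M w p \<delta> (C \<delta>)" using pc unfolding pos_rec_class_def by blast
    obtain x0 where x0: "x0 \<in> C \<delta>" using cc unfolding communication_class_def by blast
    have clos: "\<forall>x\<in>C \<delta>. \<forall>i<M. roundoff \<delta> (w i x) \<in> C \<delta>"
      using class_closed[OF p1 prob(2) p3 pc] by blast
    have small_pow: "\<exists>n. s^n * N \<le> \<epsilon>" if en: "0 < \<epsilon>" "0 \<le> N" for \<epsilon> N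
    proof -
      obtain n where n: "s^n < \<epsilon> / (N + 1)" using real_arch_pow_inv[of "\<epsilon> / (N + 1)" s] en s1 by auto
      have "s^n * N \<le> s^n * (N + 1)" using s0 by (intro mult_left_mono) auto
      also have "\<dots> < \<epsilon>" using n en by (simp add: less_divide_eq add_nonneg_pos)
      finally show ?thesis using less_imp_le by blast
    qed
    have part1: "(INF a\<in>A. ennreal (nrm (x - a))) \<le> ennreal (B \<delta>)" if x: "x \<in> C \<delta>" for x
    proof (rule INF_le_eps[OF _ B0])
      fix \<epsilon> :: real assume eps: "0 < \<epsilon>"
      have "mutually_accessible M w p \<delta> (C \<delta>)" using cc unfolding communication_class_def by blast
      then obtain k where k: "k \<ge> 1" "0 < Pk M w p \<delta> k x x"
        using x unfolding mutually_accessible_def accessible_def by blast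
      obtain a0 where a0: "a0 \<in> A" using attr(1) by blast
      obtain n where n: "s^n * nrm (x - a0) \<le> \<epsilon>" using small_pow[OF eps nrm_basic(3)[OF norm]] by blast
      have "0 < Pk M w p \<delta> (Suc n * k) x x" by (rule Pk_mult[OF p1 k(2)])
      then obtain a' where a': "a' \<in> A"
        "nrm (x - a') \<le> s^(Suc n * k) * nrm (x - a0) + e * (\<Sum>j<Suc n * k. s^j)"
        using path_near[OF norm p1 wA ctr s0 err _ a0] by blast
      have "Suc n * 1 \<le> Suc n * k" using k(1) by (rule mult_le_mono2)
      hence "n \<le> Suc n * k" by simp
      hence "s^(Suc n * k) \<le> s^n" using s0 s1 by (intro power_decreasing) auto
      hence "s^(Suc n * k) * nrm (x - a0) \<le> s^n * nrm (x - a0)"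
        using nrm_basic(3)[OF norm] by (intro mult_right_mono) auto
      hence "nrm (x - a') \<le> B \<delta> + \<epsilon>" using a'(2) n eB[of "Suc n * k"] by linarith
      thus "\<exists>a\<in>A. nrm (x - a) \<le> B \<delta> + \<epsilon>" using a'(1) by blast
    qed
    have part2: "(INF x\<in>C \<delta>. ennreal (nrm (x - a))) \<le> ennreal (B \<delta>)" if a: "a \<in> A" for a
    proof (rule INF_le_eps[OF _ B0])
      fix \<epsilon> :: real assume eps: "0 < \<epsilon>"
      have N0: "0 \<le> nrm x0 + K * R0" using R[OF a] nrm_basic(3)[OF norm, of x0] nrm_basic(3)[OF norm, of a] by linarith
      obtain n where n: "s^n * (nrm x0 + K * R0) \<le> \<epsilon>" using small_pow[OF eps N0] by blast
      obtain x a' where xa: "x \<in> C \<delta>" "a' \<in> A"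
        "nrm (x - a) \<le> s^n * nrm (x0 - a') + e * (\<Sum>j<n. s^j)"
        using approx_attr[OF norm clos x0 cover ctr s0 err, of n] a by blast
      have "nrm (x0 - a') = nrm (x0 + - a')" by simp
      also have "\<dots> \<le> nrm x0 + nrm (- a')" by (rule nrm_basic(5)[OF norm])
      also have "\<dots> \<le> nrm x0 + K * R0" using R[OF xa(2)] nrm_basic(2)[OF norm] by simp
      finally have "s^n * nrm (x0 - a') \<le> s^n * (nrm x0 + K * R0)" using s0 by (intro mult_left_mono) auto
      hence "nrm (x - a) \<le> B \<delta> + \<epsilon>" using xa(3) n eB[of n] by linarith
      thus "\<exists>x\<in>C \<delta>. nrm (x - a) \<le> B \<delta> + \<epsilon>" using xa(1) by blast
    qed
    show ?thesis unfolding hausdorff_dist_def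
      by (intro max.boundedI SUP_least part1 part2)
  qed
  have ev: "\<forall>\<^sub>F \<delta> in at_right 0. hausdorff_dist (\<lambda>x y. nrm (x - y)) (C \<delta>) A \<le> ennreal (B \<delta>)"
    using choice eventually_at_right_less[of "0::real"] by eventually_elim (rule key)
  have lim: "((\<lambda>\<delta>. B \<delta>) \<longlongrightarrow> 0 / 2 * K / (1 - s)) (at_right 0)"
    unfolding B_def by (intro tendsto_intros) (use s1 in auto)
  hence lim': "((\<lambda>\<delta>. ennreal (B \<delta>)) \<longlongrightarrow> 0) (at_right 0)"
    using tendsto_ennrealI[OF lim] by simp
  show ?thesis
    by (rule tendsto_sandwich[OF _ ev tendsto_const lim']) simp
qed

end
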